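(* Let $\rho$ be a probability measure on subgraphs $G$ of $\mathbb Z^2$ invariant under translations (or a joint law of a subgraph $G$ and interactions $w\in\mathbb R^{E(\mathbb Z^2)}$ invariant under the diagonal action of translations), such that almost surely every vertex of $G$ is contained in only finitely many simple cycles of $G$. Then there exists a random subgraph $F$, jointly distributed with $G$ (and $w$), such that the marginal law of $G$ (resp. $(G,w)$) is $\rho$, the joint law of $(G,F)$ (resp. $(G,w,F)$) is translation invariant, and almost surely $F$ is a spanning forest of $G$ whose connected components are exactly the connected components of $G$ (i.e. $F\subseteq G$, $F$ has no cycles, and two vertices are connected in $F$ iff they are connected in $G$).
   Context: $\mathbb Z^2$ is the square lattice graph; translations of $\mathbb Z^2$ act on subgraphs and on edge-indexed interactions. A cycle is a closed path; it is simple if it has no self-intersections. *)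

theory Defs
  imports "HOL-Probability.Probability"
begin

type_synonym vtx = "int \<times> int"

text \<open>Edges of Z^2 are indexed bijectively by (base vertex, direction):
  (x, False) is the horizontal edge {x, x+(1,0)}, (x, True) the vertical edge {x, x+(0,1)}.\<close>
type_synonym edge = "vtx \<times> bool"

definition ends :: "edge \<Rightarrow> vtx set" where
  "ends e = (case e of (x, d) \<Rightarrow>
     {x, if d then (fst x, snd x + 1) else (fst x + 1, snd x)})"

definition shift_v :: "vtx \<Rightarrow> vtx \<Rightarrow> vtx" where
  "shift_v a x = (fst x + fst a, snd x + snd a)"

definition shift_e :: "vtx \<Rightarrow> edge \<Rightarrow> edge" where
  "shift_e a e = (shift_v a (fst e), snd e)"

definition shift_cfg :: "vtx \<Rightarrow> (edge \<Rightarrow> 'b) \<Rightarrow> edge \<Rightarrow> 'b" where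
  "shift_cfg a g = (\<lambda>e. g (shift_e (- fst a, - snd a) e))"

definition Mcfg :: "(edge \<Rightarrow> bool) measure" where
  "Mcfg = Pi\<^sub>M UNIV (\<lambda>_. count_space UNIV)"

definition Mw :: "(edge \<Rightarrow> real) measure" where
  "Mw = Pi\<^sub>M UNIV (\<lambda>_. borel)"

definition gstep :: "(edge \<Rightarrow> bool) \<Rightarrow> vtx \<Rightarrow> vtx \<Rightarrow> bool" where
  "gstep H u v \<longleftrightarrow> (\<exists>e. H e \<and> ends e = {u, v})"

definition connected_in :: "(edge \<Rightarrow> bool) \<Rightarrow> vtx \<Rightarrow> vtx \<Rightarrow> bool" where
  "connected_in H u v \<longleftrightarrow> (gstep H)\<^sup>*\<^sup>* u v"

definition simple_cycle :: "(edge \<Rightarrow> bool) \<Rightarrow> edge set \<Rightarrow> bool" where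
  "simple_cycle H C \<longleftrightarrow> (\<exists>vs. distinct vs \<and> length vs \<ge> 3 \<and>
     (\<forall>i < length vs. \<exists>e. ends e = {vs ! i, vs ! ((i + 1) mod length vs)}) \<and>
     C = {e. \<exists>i < length vs. ends e = {vs ! i, vs ! ((i + 1) mod length vs)}} \<and>
     (\<forall>e \<in> C. H e))"

definition finitely_many_cycles :: "(edge \<Rightarrow> bool) \<Rightarrow> bool" where
  "finitely_many_cycles G \<longleftrightarrow>
     (\<forall>v. finite {C. simple_cycle G C \<and> v \<in> \<Union>(ends ` C)})"

definition spanning_forest :: "(edge \<Rightarrow> bool) \<Rightarrow> (edge \<Rightarrow> bool) \<Rightarrow> bool" where
  "spanning_forest G F \<longleftrightarrow>
     (\<forall>e. F e \<longrightarrow> G e) \<and> \<not> (\<exists>C. simple_cycle F C) \<and>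
     (\<forall>u v. connected_in F u v \<longleftrightarrow> connected_in G u v)"

end

theory Submission
  imports Defs
begin


fun ppairs :: "vtx list \<Rightarrow> vtx set set" where
  "ppairs (x # y # zs) = insert {x, y} (ppairs (y # zs))"
| "ppairs _ = {}"

definition cpairs :: "vtx list \<Rightarrow> vtx set set" where
  "cpairs vs = (if vs = [] then {} else insert {last vs, hd vs} (ppairs vs))"

definition Cs :: "vtx list \<Rightarrow> edge set" where
  "Cs vs = {e. ends e \<in> cpairs vs}"

definition scyc :: "(edge \<Rightarrow> bool) \<Rightarrow> vtx list \<Rightarrow> bool" where
  "scyc H vs \<longleftrightarrow> distinct vs \<and> 3 \<le> length vs \<and> (\<forall>p\<in>cpairs vs. \<exists>e. H e \<and> ends e = p)"

lemma ends_inj: "inj ends"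
proof (rule injI)
  fix e1 e2 :: edge assume h: "ends e1 = ends e2"
  obtain a b d where e1: "e1 = ((a,b),d)" by (metis prod.exhaust)
  obtain a' b' d' where e2: "e2 = ((a',b'),d')" by (metis prod.exhaust)
  show "e1 = e2" using h unfolding e1 e2 ends_def
    by (cases d; cases d'; auto simp: doubleton_eq_iff)
qed

lemma ppairs_app: "xs \<noteq> [] \<Longrightarrow> ppairs (xs @ y # ys) = ppairs xs \<union> insert {last xs, y} (ppairs (y # ys))"
  by (induction xs rule: ppairs.induct) auto

lemma ppairs_app': "xs \<noteq> [] \<Longrightarrow> ys \<noteq> [] \<Longrightarrow> ppairs (xs @ ys) = ppairs xs \<union> insert {last xs, hd ys} (ppairs ys)"
  by (cases ys) (auto simp: ppairs_app)

lemma ppairs_rev: "ppairs (rev xs) = ppairs xs"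
proof (induction xs rule: ppairs.induct)
  case (1 x y zs)
  have "ppairs (rev (x # y # zs)) = ppairs (rev (y # zs) @ [x])" by simp
  also have "\<dots> = ppairs (rev (y # zs)) \<union> insert {last (rev (y#zs)), x} (ppairs [x])"
    using ppairs_app'[of "rev (y # zs)" "[x]"] by simp
  also have "\<dots> = insert {x, y} (ppairs (y # zs))" using 1 by (auto simp: insert_commute)
  finally show ?case by simp
qed auto

lemma ppairs_subset: "p \<in> ppairs xs \<Longrightarrow> p \<subseteq> set xs"
  by (induction xs rule: ppairs.induct) auto

lemma ppairs_finite: "finite (ppairs xs)"
  by (induction xs rule: ppairs.induct) auto

lemma ppairs_idx: "p \<in> ppairs xs \<longleftrightarrow> (\<exists>i. Suc i < length xs \<and> p = {xs!i, xs!Suc i})"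
proof (induction xs rule: ppairs.induct)
  case (1 x y zs)
  show ?case
  proof
    assume "p \<in> ppairs (x # y # zs)"
    then show "\<exists>i. Suc i < length (x # y # zs) \<and> p = {(x # y # zs)!i, (x # y # zs)!Suc i}"
      using 1 by auto
  next
    assume "\<exists>i. Suc i < length (x # y # zs) \<and> p = {(x # y # zs)!i, (x # y # zs)!Suc i}"
    then obtain i where "Suc i < length (x # y # zs)" "p = {(x # y # zs)!i, (x # y # zs)!Suc i}" by blast
    then show "p \<in> ppairs (x # y # zs)" using 1 by (cases i) auto
  qed
next
  case ("2_1")
  then show ?case by auto
next
  case ("2_2" v)
  then show ?case by auto
qed

lemma ppairs_decomp: "p \<in> ppairs xs \<Longrightarrow> \<exists>as a b bs. xs = as @ a # b # bs \<and> p = {a, b}"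
proof (induction xs rule: ppairs.induct)
  case (1 x y zs)
  show ?case
  proof (cases "p = {x,y}")
    case True then show ?thesis by (metis append_Nil)
  next
    case False
    then have "p \<in> ppairs (y # zs)" using 1 by auto
    then obtain as a b bs where "y # zs = as @ a # b # bs" "p = {a,b}" using 1 by blast
    then show ?thesis by (metis append_Cons)
  qed
qed auto

lemma cpairs_rot: "xs \<noteq> [] \<Longrightarrow> ys \<noteq> [] \<Longrightarrow> cpairs (xs @ ys) = cpairs (ys @ xs)"
proof -
  assume xs: "xs \<noteq> []" and ys: "ys \<noteq> []"
  obtain y ys' where ys': "ys = y # ys'" using ys by (cases ys) auto
  obtain x xs' where xs': "xs = x # xs'" using xs by (cases xs) auto
  have "cpairs (xs @ ys) = insert {last ys, hd xs} (ppairs xs \<union> insert {last xs, hd ys} (ppairs ys))"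
    using xs ys by (simp add: cpairs_def ppairs_app')
  moreover have "cpairs (ys @ xs) = insert {last xs, hd ys} (ppairs ys \<union> insert {last ys, hd xs} (ppairs xs))"
    using xs ys by (simp add: cpairs_def ppairs_app')
  ultimately show ?thesis by auto
qed

lemma cpairs_subset: "p \<in> cpairs xs \<Longrightarrow> p \<subseteq> set xs"
  by (cases "xs = []") (auto simp: cpairs_def dest: ppairs_subset)

lemma cpairs_finite: "finite (cpairs xs)"
  by (simp add: cpairs_def ppairs_finite)

lemma Cs_finite: "finite (Cs vs)"
  unfolding Cs_def using finite_vimageI[OF cpairs_finite ends_inj] by (simp add: vimage_def)

lemma rot_exists:
  assumes "p \<in> cpairs cs"
  shows "\<exists>cs'. cpairs cs' = cpairs cs \<and> set cs' = set cs \<and> distinct cs' = distinct cs \<and>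
     length cs' = length cs \<and> p = {last cs', hd cs'}"
proof -
  have ne: "cs \<noteq> []" using assms by (auto simp: cpairs_def split: if_splits)
  show ?thesis
  proof (cases "p = {last cs, hd cs}")
    case True then show ?thesis by blast
  next
    case False
    then have "p \<in> ppairs cs" using assms ne by (simp add: cpairs_def)
    then obtain as a b bs where cs: "cs = as @ a # b # bs" and p: "p = {a,b}"
      using ppairs_decomp by blast
    define cs' where "cs' = (b # bs) @ (as @ [a])"
    have "cpairs cs' = cpairs cs" unfolding cs'_def cs
      using cpairs_rot[of "b # bs" "as @ [a]"] by simp
    moreover have "set cs' = set cs" "distinct cs' = distinct cs" "length cs' = length cs"
      unfolding cs'_def cs by auto
    moreover have "p = {last cs', hd cs'}" unfolding cs'_def p by auto
    ultimately show ?thesis by blast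
  qed
qed

lemma closing_notin:
  assumes "distinct xs" "3 \<le> length xs"
  shows "{last xs, hd xs} \<notin> ppairs xs"
proof
  assume "{last xs, hd xs} \<in> ppairs xs"
  then obtain i where i: "Suc i < length xs" "{last xs, hd xs} = {xs!i, xs!Suc i}"
    using ppairs_idx by blast
  have ne: "xs \<noteq> []" using assms by auto
  have l: "last xs = xs ! (length xs - 1)" "hd xs = xs ! 0" using ne
    by (auto simp: last_conv_nth hd_conv_nth)
  have inj: "\<And>j k. j < length xs \<Longrightarrow> k < length xs \<Longrightarrow> xs!j = xs!k \<Longrightarrow> j = k"
    using assms(1) nth_eq_iff_index_eq by blast
  have n1: "length xs - 1 < length xs" using ne by simp
  from i(2) have "(xs!(length xs - 1) = xs!i \<and> xs!0 = xs!Suc i) \<or> (xs!(length xs - 1) = xs!Suc i \<and> xs!0 = xs!i)"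
    unfolding l by (auto simp: doubleton_eq_iff)
  then show False
  proof
    assume "xs!(length xs - 1) = xs!i \<and> xs!0 = xs!Suc i"
    then have "length xs - 1 = i" using inj[OF n1, of i] i(1) by simp
    then show False using i(1) by simp
  next
    assume h: "xs!(length xs - 1) = xs!Suc i \<and> xs!0 = xs!i"
    then have "length xs - 1 = Suc i" using inj[OF n1, of "Suc i"] i(1) by simp
    moreover have "0 = i" using h inj[of 0 i] i(1) ne by simp
    ultimately show False using assms(2) by simp
  qed
qed

lemma cpairs_idx:
  assumes "vs \<noteq> []"
  shows "p \<in> cpairs vs \<longleftrightarrow> (\<exists>i < length vs. p = {vs ! i, vs ! ((i + 1) mod length vs)})"
proof
  assume "p \<in> cpairs vs"
  then have "p = {last vs, hd vs} \<or> p \<in> ppairs vs" using assms by (auto simp: cpairs_def)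
  then show "\<exists>i < length vs. p = {vs ! i, vs ! ((i + 1) mod length vs)}"
  proof
    assume "p = {last vs, hd vs}"
    then show ?thesis using assms
      by (intro exI[of _ "length vs - 1"]) (auto simp: last_conv_nth hd_conv_nth)
  next
    assume "p \<in> ppairs vs"
    then obtain i where "Suc i < length vs" "p = {vs!i, vs!Suc i}" using ppairs_idx by blast
    then show ?thesis by (intro exI[of _ i]) auto
  qed
next
  assume "\<exists>i < length vs. p = {vs ! i, vs ! ((i + 1) mod length vs)}"
  then obtain i where i: "i < length vs" "p = {vs ! i, vs ! ((i + 1) mod length vs)}" by blast
  show "p \<in> cpairs vs"
  proof (cases "Suc i < length vs")
    case True
    then have "p \<in> ppairs vs" using i ppairs_idx by auto
    then show ?thesis using assms by (simp add: cpairs_def)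
  next
    case False
    then have "i = length vs - 1" using i by auto
    then have "p = {last vs, hd vs}" using i assms
      by (auto simp: last_conv_nth hd_conv_nth)
    then show ?thesis using assms by (simp add: cpairs_def)
  qed
qed

lemma path_conn:
  assumes "\<forall>p\<in>ppairs xs. \<exists>e. R e \<and> ends e = p" "xs \<noteq> []"
  shows "(gstep R)\<^sup>*\<^sup>* (hd xs) (last xs)"
  using assms
proof (induction xs rule: ppairs.induct)
  case (1 x y zs)
  then have "gstep R x y" unfolding gstep_def by auto
  moreover have "(gstep R)\<^sup>*\<^sup>* y (last (y # zs))" using 1 by auto
  ultimately show ?case by (auto intro: converse_rtranclp_into_rtranclp)
qed auto

lemma gstep_sym: "gstep R x y \<Longrightarrow> gstep R y x"
  unfolding gstep_def by (auto simp: insert_commute)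

lemma conn_sym: "(gstep R)\<^sup>*\<^sup>* x y \<Longrightarrow> (gstep R)\<^sup>*\<^sup>* y x"
  by (induction rule: rtranclp_induct) (auto intro: converse_rtranclp_into_rtranclp gstep_sym)

lemma scyc_alt: "scyc H vs \<longleftrightarrow> distinct vs \<and> 3 \<le> length vs \<and> (\<forall>p\<in>cpairs vs. \<exists>e. ends e = p)
   \<and> (\<forall>e\<in>Cs vs. H e)"
proof
  assume s: "scyc H vs"
  have "\<forall>e\<in>Cs vs. H e"
  proof
    fix e assume "e \<in> Cs vs"
    then have "ends e \<in> cpairs vs" by (simp add: Cs_def)
    then obtain e' where "H e'" "ends e' = ends e" using s unfolding scyc_def by blast
    then show "H e" using injD[OF ends_inj] by metis
  qed
  then show "distinct vs \<and> 3 \<le> length vs \<and> (\<forall>p\<in>cpairs vs. \<exists>e. ends e = p) \<and> (\<forall>e\<in>Cs vs. H e)"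
    using s unfolding scyc_def by blast
next
  assume s: "distinct vs \<and> 3 \<le> length vs \<and> (\<forall>p\<in>cpairs vs. \<exists>e. ends e = p) \<and> (\<forall>e\<in>Cs vs. H e)"
  show "scyc H vs" unfolding scyc_def
  proof (intro conjI ballI)
    fix p assume "p \<in> cpairs vs"
    then obtain e where "ends e = p" using s by blast
    then show "\<exists>e. H e \<and> ends e = p" using s \<open>p \<in> cpairs vs\<close> unfolding Cs_def by blast
  qed (use s in auto)
qed

lemma simple_cycle_iff: "simple_cycle H C \<longleftrightarrow> (\<exists>vs. scyc H vs \<and> C = Cs vs)"
proof -
  have *: "\<And>vs. vs \<noteq> [] \<Longrightarrow> {e. \<exists>i<length vs. ends e = {vs ! i, vs ! ((i + 1) mod length vs)}} = Cs vs"
    by (simp add: Cs_def cpairs_idx)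
  have **: "\<And>vs. vs \<noteq> [] \<Longrightarrow> (\<forall>i < length vs. \<exists>e. ends e = {vs ! i, vs ! ((i + 1) mod length vs)})
     = (\<forall>p\<in>cpairs vs. \<exists>e. ends e = p)"
  proof -
    fix vs :: "vtx list" assume ne: "vs \<noteq> []"
    show "(\<forall>i < length vs. \<exists>e. ends e = {vs ! i, vs ! ((i + 1) mod length vs)})
     = (\<forall>p\<in>cpairs vs. \<exists>e. ends e = p)"
    proof
      assume h: "\<forall>i < length vs. \<exists>e. ends e = {vs ! i, vs ! ((i + 1) mod length vs)}"
      show "\<forall>p\<in>cpairs vs. \<exists>e. ends e = p"
      proof
        fix p assume "p \<in> cpairs vs"
        then obtain i where "i < length vs" "p = {vs ! i, vs ! ((i + 1) mod length vs)}"
          using cpairs_idx[OF ne] by blast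
        then show "\<exists>e. ends e = p" using h by blast
      qed
    next
      assume h: "\<forall>p\<in>cpairs vs. \<exists>e. ends e = p"
      show "\<forall>i < length vs. \<exists>e. ends e = {vs ! i, vs ! ((i + 1) mod length vs)}"
      proof (intro allI impI)
        fix i assume "i < length vs"
        then have "{vs ! i, vs ! ((i + 1) mod length vs)} \<in> cpairs vs" using cpairs_idx[OF ne] by blast
        then show "\<exists>e. ends e = {vs ! i, vs ! ((i + 1) mod length vs)}" using h by blast
      qed
    qed
  qed
  show ?thesis
  proof
    assume "simple_cycle H C"
    then obtain vs where v: "distinct vs" "length vs \<ge> 3"
      "\<forall>i < length vs. \<exists>e. ends e = {vs ! i, vs ! ((i + 1) mod length vs)}"
      "C = {e. \<exists>i<length vs. ends e = {vs ! i, vs ! ((i + 1) mod length vs)}}" "\<forall>e \<in> C. H e"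
      unfolding simple_cycle_def by blast
    have ne: "vs \<noteq> []" using v(2) by auto
    have C: "C = Cs vs" using v(4) *[OF ne] by simp
    have "\<forall>p\<in>cpairs vs. \<exists>e. ends e = p" using v(3) **[OF ne] by simp
    then have "scyc H vs" unfolding scyc_alt using v(1,2,5) C by simp
    then show "\<exists>vs. scyc H vs \<and> C = Cs vs" using C by blast
  next
    assume "\<exists>vs. scyc H vs \<and> C = Cs vs"
    then obtain vs where v: "scyc H vs" "C = Cs vs" by blast
    have ne: "vs \<noteq> []" using v(1) unfolding scyc_def by auto
    have a: "distinct vs" "3 \<le> length vs" "\<forall>p\<in>cpairs vs. \<exists>e. ends e = p" "\<forall>e\<in>Cs vs. H e"
      using v(1) unfolding scyc_alt by auto
    have b: "\<forall>i < length vs. \<exists>e. ends e = {vs ! i, vs ! ((i + 1) mod length vs)}"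
      using a(3) **[OF ne] by simp
    have c: "C = {e. \<exists>i<length vs. ends e = {vs ! i, vs ! ((i + 1) mod length vs)}}"
      using v(2) *[OF ne] by simp
    show "simple_cycle H C" unfolding simple_cycle_def
      apply (rule exI[of _ vs])
      using a b c v(2) by simp
  qed
qed

lemma scyc_vert: "scyc H vs \<Longrightarrow> v \<in> \<Union>(ends ` Cs vs) \<longleftrightarrow> v \<in> set vs"
proof
  assume "v \<in> \<Union>(ends ` Cs vs)"
  then show "v \<in> set vs" by (auto simp: Cs_def dest: cpairs_subset)
next
  assume s: "scyc H vs" and v: "v \<in> set vs"
  then obtain i where i: "i < length vs" "v = vs ! i" by (metis in_set_conv_nth)
  have ne: "vs \<noteq> []" using v by auto
  have "{vs ! i, vs ! ((i + 1) mod length vs)} \<in> cpairs vs" using i ne cpairs_idx by blast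
  then obtain e where "ends e = {vs ! i, vs ! ((i + 1) mod length vs)}" using s unfolding scyc_def by blast
  moreover have "e \<in> Cs vs" using calculation \<open>{vs ! i, vs ! ((i + 1) mod length vs)} \<in> cpairs vs\<close>
    by (simp add: Cs_def)
  ultimately show "v \<in> \<Union>(ends ` Cs vs)" using i by auto
qed


lemma cpairs_ne: "xs \<noteq> [] \<Longrightarrow> cpairs xs = insert {last xs, hd xs} (ppairs xs)"
  by (simp add: cpairs_def)

lemma scyc_cong: "scyc H vs \<Longrightarrow> cpairs vs' = cpairs vs \<Longrightarrow> distinct vs' \<Longrightarrow> length vs' = length vs \<Longrightarrow> scyc H vs'"
  unfolding scyc_def by simp

lemma rot_start:
  assumes "p \<in> set ds"
  shows "\<exists>rest. cpairs (p # rest) = cpairs ds \<and> set (p # rest) = set ds \<and> distinct (p # rest) = distinct ds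
     \<and> length (p # rest) = length ds"
proof -
  obtain a b where ds: "ds = a @ p # b" using split_list[OF assms] by blast
  show ?thesis
  proof (cases "a = []")
    case True then show ?thesis using ds by (intro exI[of _ b]) simp
  next
    case False
    have "cpairs ((p # b) @ a) = cpairs (a @ (p # b))" using cpairs_rot[of "p # b" a] False by simp
    moreover have "set (p # b @ a) = set ds" "distinct (p # b @ a) = distinct ds" "length (p # b @ a) = length ds"
      using ds by auto
    ultimately show ?thesis using ds by (intro exI[of _ "b @ a"]) simp
  qed
qed

lemma ppairs_mono_app: "ppairs xs \<subseteq> ppairs (xs @ ys)"
  by (cases "xs = []"; cases "ys = []") (auto simp: ppairs_app')

lemma ppairs_mono_app2: "ppairs ys \<subseteq> ppairs (xs @ ys)"
  by (cases "xs = []"; cases "ys = []") (auto simp: ppairs_app')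


lemma glue_base:
  assumes ds: "scyc G ds" and u: "u \<in> set ds"
    and P: "P = p # mid @ [q]" "distinct P" and pq: "p \<in> set ds" "q \<in> set ds"
    and mid: "set mid \<inter> set ds = {}"
    and edges: "\<forall>pr\<in>ppairs P. \<exists>e. G e \<and> ends e = pr" and pr: "pr \<in> ppairs P"
  shows "\<exists>vs. scyc G vs \<and> u \<in> set vs \<and> pr \<in> cpairs vs"
proof (cases "pr \<in> cpairs ds")
  case True then show ?thesis using ds u by blast
next
  case notin: False
  obtain rest where r: "cpairs (p # rest) = cpairs ds" "set (p # rest) = set ds" "distinct (p # rest) = distinct ds"
     "length (p # rest) = length ds" using rot_start[OF pq(1)] by blast
  have dsd: "distinct ds" using ds unfolding scyc_def by simp
  have pq_ne: "p \<noteq> q" using P by auto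
  have qr: "q \<in> set rest" using pq(2) pq_ne r(2) by auto
  obtain r1 r2 where rest: "rest = r1 @ q # r2" using split_list[OF qr] by blast
  define ds' where "ds' = p # r1 @ q # r2"
  have ds'c: "cpairs ds' = cpairs ds" "set ds' = set ds" "distinct ds'" using r rest dsd ds'_def by auto
  have Gds: "\<forall>pr\<in>cpairs ds. \<exists>e. G e \<and> ends e = pr" using ds unfolding scyc_def by simp
  have pp_ds': "ppairs ds' \<subseteq> cpairs ds" using ds'c(1) unfolding ds'_def by (simp add: cpairs_ne) blast
  have c0: "{last ds', hd ds'} \<in> cpairs ds'" unfolding cpairs_def ds'_def by simp
  have l0: "last ds' = last (q # r2)" "hd ds' = p" unfolding ds'_def by simp_all
  have clos: "{last (q # r2), p} \<in> cpairs ds" using c0 ds'c(1) l0 by simp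
  have ppP: "ppairs P = ppairs (p # mid) \<union> {{last (p # mid), q}}"
    using ppairs_app'[of "p # mid" "[q]"] P(1) by simp
  have dP: "p \<notin> set mid" "q \<notin> set mid" "distinct mid" using P by auto
  have dD: "p \<notin> set r1" "p \<notin> set r2" "q \<notin> set r1" "q \<notin> set r2" "distinct r1" "distinct r2"
    "set r1 \<inter> set r2 = {}"
    using ds'c(3) unfolding ds'_def by auto
  have mD: "set mid \<inter> set r1 = {}" "set mid \<inter> set r2 = {}" using mid ds'c(2) unfolding ds'_def by auto
  show ?thesis
  proof (cases "u \<in> set r1")
    case False
    define vs where "vs = (p # mid) @ (q # r2)"
    have pv: "ppairs vs = ppairs P \<union> ppairs (q # r2)"
      unfolding vs_def ppP using ppairs_app'[of "p # mid" "q # r2"] by simp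
    have cv: "cpairs vs = insert {last (q # r2), p} (ppairs vs)" unfolding vs_def by (simp add: cpairs_ne)
    have "ppairs (q # r2) \<subseteq> ppairs ds'" unfolding ds'_def
      using ppairs_mono_app2[of "q # r2" "p # r1"] by simp
    then have h1: "ppairs (q # r2) \<subseteq> cpairs ds" using pp_ds' by (rule subset_trans)
    have sub: "cpairs vs \<subseteq> ppairs P \<union> cpairs ds" unfolding cv pv using clos h1 by blast
    have dv: "distinct vs" unfolding vs_def using dP dD mD pq_ne by auto
    have lv: "3 \<le> length vs"
    proof (rule ccontr)
      assume a: "\<not> 3 \<le> length vs"
      have "length vs = 2 + length mid + length r2" by (simp add: vs_def)
      then have "length mid + length r2 = 0" using a by linarith
      then have "mid = []" "r2 = []" by simp_all
      then have "pr = {p, q}" using pr P(1) by simp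
      then show False using notin clos \<open>r2 = []\<close> by (simp add: insert_commute)
    qed
    have "\<forall>x\<in>cpairs vs. \<exists>e. G e \<and> ends e = x"
    proof
      fix x assume "x \<in> cpairs vs"
      then have "x \<in> ppairs P \<or> x \<in> cpairs ds" using sub by blast
      then show "\<exists>e. G e \<and> ends e = x" using edges Gds by blast
    qed
    then have "scyc G vs" unfolding scyc_def using dv lv by simp
    moreover have "u \<in> set vs" using False u ds'c(2) unfolding vs_def ds'_def by auto
    moreover have "pr \<in> cpairs vs" using pr pv cv by blast
    ultimately show ?thesis by blast
  next
    case True
    define vs where "vs = (p # r1) @ (q # rev mid)"
    have pv: "ppairs vs = ppairs (p # r1) \<union> insert {last (p # r1), q} (ppairs (q # rev mid))"
      unfolding vs_def using ppairs_app'[of "p # r1" "q # rev mid"] by simp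
    have cv: "cpairs vs = insert {last (q # rev mid), p} (ppairs vs)" unfolding vs_def by (simp add: cpairs_ne)
    have a1: "ppairs (p # r1) \<union> {{last (p # r1), q}} = ppairs (p # r1 @ [q])"
      using ppairs_app'[of "p # r1" "[q]"] by simp
    have a2: "ppairs (p # r1 @ [q]) \<subseteq> ppairs ds'" unfolding ds'_def
      using ppairs_mono_app[of "p # r1 @ [q]" r2] by simp
    have a3: "insert {last (q # rev mid), p} (ppairs (q # rev mid)) = ppairs P"
    proof -
      have "ppairs ((q # rev mid) @ [p]) = ppairs (q # rev mid) \<union> {{last (q # rev mid), p}}"
        using ppairs_app'[of "q # rev mid" "[p]"] by simp
      moreover have "(q # rev mid) @ [p] = rev P" using P(1) by simp
      ultimately have "ppairs P = ppairs (q # rev mid) \<union> {{last (q # rev mid), p}}"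
        using ppairs_rev[of P] by simp
      then show ?thesis by blast
    qed
    have cv2: "cpairs vs = ppairs (p # r1 @ [q]) \<union> ppairs P" using cv pv a1 a3 by blast
    have sub: "cpairs vs \<subseteq> ppairs P \<union> cpairs ds" using cv2 a2 pp_ds' by blast
    have dv: "distinct vs" unfolding vs_def using dP dD mD pq_ne by auto
    have lv: "3 \<le> length vs" using True unfolding vs_def by (cases r1) auto
    have "\<forall>x\<in>cpairs vs. \<exists>e. G e \<and> ends e = x"
    proof
      fix x assume "x \<in> cpairs vs"
      then have "x \<in> ppairs P \<or> x \<in> cpairs ds" using sub by blast
      then show "\<exists>e. G e \<and> ends e = x" using edges Gds by blast
    qed
    then have "scyc G vs" unfolding scyc_def using dv lv by simp
    moreover have "u \<in> set vs" using True unfolding vs_def by auto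
    moreover have "pr \<in> cpairs vs" using pr cv2 by blast
    ultimately show ?thesis by blast
  qed
qed


lemma glue_path:
  assumes ds: "scyc G ds" and u: "u \<in> set ds"
  shows "distinct P \<Longrightarrow> 2 \<le> length P \<Longrightarrow> hd P \<in> set ds \<Longrightarrow> last P \<in> set ds \<Longrightarrow>
    \<forall>pr\<in>ppairs P. \<exists>e. G e \<and> ends e = pr \<Longrightarrow> pr \<in> ppairs P \<Longrightarrow>
    \<exists>vs. scyc G vs \<and> u \<in> set vs \<and> pr \<in> cpairs vs"
proof (induction "length P" arbitrary: P rule: less_induct)
  case less
  obtain p rest where P1: "P = p # rest" using less.prems(2) by (cases P) auto
  have "rest \<noteq> []" using less.prems(2) P1 by auto
  then obtain mid q where rest: "rest = mid @ [q]" by (cases rest rule: rev_cases) auto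
  have P: "P = p # mid @ [q]" using P1 rest by simp
  have hp: "p \<in> set ds" "q \<in> set ds" using less.prems(3,4) P by simp_all
  show ?case
  proof (cases "set mid \<inter> set ds = {}")
    case True
    show ?thesis using glue_base[OF ds u P less.prems(1) hp True less.prems(5) less.prems(6)] .
  next
    case False
    then obtain w where w: "w \<in> set mid" "w \<in> set ds" by blast
    obtain m1 m2 where mid: "mid = m1 @ w # m2" using split_list[OF w(1)] by blast
    define Pa where "Pa = p # m1 @ [w]"
    define Pb where "Pb = w # m2 @ [q]"
    have PP: "P = (p # m1) @ Pb" using P mid Pb_def by simp
    have PP2: "P = Pa @ (m2 @ [q])" using P mid Pa_def by simp
    have a: "ppairs P = ppairs (p # m1) \<union> insert {last (p # m1), w} (ppairs Pb)"
      unfolding PP Pb_def by (rule ppairs_app) simp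
    have b: "ppairs Pa = ppairs (p # m1) \<union> insert {last (p # m1), w} {}"
      unfolding Pa_def using ppairs_app[of "p # m1" w "[]"] by simp
    have sa: "ppairs Pa \<subseteq> ppairs P" unfolding PP2 by (rule ppairs_mono_app)
    have sb: "ppairs Pb \<subseteq> ppairs P" unfolding PP by (rule ppairs_mono_app2)
    have prc: "pr \<in> ppairs Pa \<or> pr \<in> ppairs Pb"
    proof -
      have "pr \<in> ppairs (p # m1) \<union> insert {last (p # m1), w} (ppairs Pb)"
        using less.prems(6) a by simp
      moreover have "ppairs (p # m1) \<subseteq> ppairs Pa" "{last (p # m1), w} \<in> ppairs Pa"
        unfolding b by blast+
      ultimately show ?thesis by blast
    qed
    have la: "length Pa < length P" "length Pb < length P" using P mid Pa_def Pb_def by simp_all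
    have da: "distinct Pa" "distinct Pb" using less.prems(1) unfolding PP2 apply simp
      using less.prems(1) unfolding PP by simp
    have l2: "2 \<le> length Pa" "2 \<le> length Pb" unfolding Pa_def Pb_def by simp_all
    have hl: "hd Pa \<in> set ds" "last Pa \<in> set ds" "hd Pb \<in> set ds" "last Pb \<in> set ds"
      unfolding Pa_def Pb_def using hp w(2) by simp_all
    have ea: "\<forall>pr\<in>ppairs Pa. \<exists>e. G e \<and> ends e = pr" using less.prems(5) sa by blast
    have eb: "\<forall>pr\<in>ppairs Pb. \<exists>e. G e \<and> ends e = pr" using less.prems(5) sb by blast
    from prc show ?thesis
    proof
      assume "pr \<in> ppairs Pa"
      then show ?thesis using less.hyps[OF la(1) da(1) l2(1) hl(1,2) ea] by blast
    next
      assume "pr \<in> ppairs Pb"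
      then show ?thesis using less.hyps[OF la(2) da(2) l2(2) hl(3,4) eb] by blast
    qed
  qed
qed

lemma glue:
  assumes ds: "scyc G ds" "u \<in> set ds" "e \<in> Cs ds" and cs: "scyc G cs" "e \<in> Cs cs" "e' \<in> Cs cs"
  shows "\<exists>vs. scyc G vs \<and> u \<in> set vs \<and> e' \<in> Cs vs"
proof (cases "e' = e")
  case True then show ?thesis using ds by blast
next
  case False
  have ec: "ends e \<in> cpairs cs" using cs(2) by (simp add: Cs_def)
  obtain cs' where c: "cpairs cs' = cpairs cs" "set cs' = set cs" "distinct cs' = distinct cs"
     "length cs' = length cs" "ends e = {last cs', hd cs'}" using rot_exists[OF ec] by blast
  have lc: "3 \<le> length cs'" "distinct cs'" using cs(1) c unfolding scyc_def by simp_all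
  have ne: "cs' \<noteq> []" using lc by auto
  have e'c: "ends e' \<in> cpairs cs'" using cs(3) c(1) by (simp add: Cs_def)
  have "ends e' \<noteq> ends e" using False injD[OF ends_inj] by metis
  then have e'p: "ends e' \<in> ppairs cs'" using e'c c(5) cpairs_ne[OF ne] by simp
  have "ends e \<subseteq> set ds" using ds(3) cpairs_subset by (simp add: Cs_def)
  then have hl: "hd cs' \<in> set ds" "last cs' \<in> set ds" using c(5) by simp_all
  have ed: "\<forall>pr\<in>ppairs cs'. \<exists>e. G e \<and> ends e = pr"
  proof
    fix pr assume "pr \<in> ppairs cs'"
    then have "pr \<in> cpairs cs'" using cpairs_ne[OF ne] by simp
    then have "pr \<in> cpairs cs" using c(1) by simp
    then show "\<exists>e. G e \<and> ends e = pr" using cs(1) unfolding scyc_def by blast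
  qed
  have l2: "2 \<le> length cs'" using lc by simp
  obtain vs where "scyc G vs" "u \<in> set vs" "ends e' \<in> cpairs vs"
    using glue_path[OF ds(1,2) lc(2) l2 hl ed e'p] by blast
  then show ?thesis by (auto simp: Cs_def)
qed

lemma cyc_path:
  assumes s: "scyc H vs" and e: "e \<in> Cs vs" and xy: "ends e = {x, y}"
  shows "(gstep (\<lambda>e'. H e' \<and> e' \<in> Cs vs \<and> e' \<noteq> e))\<^sup>*\<^sup>* x y"
proof -
  have ec: "ends e \<in> cpairs vs" using e by (simp add: Cs_def)
  obtain vs' where c: "cpairs vs' = cpairs vs" "set vs' = set vs" "distinct vs' = distinct vs"
     "length vs' = length vs" "ends e = {last vs', hd vs'}" using rot_exists[OF ec] by blast
  have lc: "3 \<le> length vs'" "distinct vs'" using s c unfolding scyc_def by simp_all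
  have ne: "vs' \<noteq> []" using lc by auto
  have cn: "{last vs', hd vs'} \<notin> ppairs vs'" using closing_notin[OF lc(2,1)] .
  let ?R = "\<lambda>e'. H e' \<and> e' \<in> Cs vs \<and> e' \<noteq> e"
  have ed: "\<forall>pr\<in>ppairs vs'. \<exists>e'. ?R e' \<and> ends e' = pr"
  proof
    fix pr assume pr: "pr \<in> ppairs vs'"
    then have "pr \<in> cpairs vs'" using cpairs_ne[OF ne] by simp
    then have "pr \<in> cpairs vs" using c(1) by simp
    then obtain e' where e': "H e'" "ends e' = pr" using s unfolding scyc_def by blast
    have "e' \<in> Cs vs" using e' \<open>pr \<in> cpairs vs\<close> by (simp add: Cs_def)
    moreover have "e' \<noteq> e" using e'(2) pr cn c(5) by auto
    ultimately show "\<exists>e'. ?R e' \<and> ends e' = pr" using e' by blast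
  qed
  have p: "(gstep ?R)\<^sup>*\<^sup>* (hd vs') (last vs')" using path_conn[OF ed ne] .
  have "(x = last vs' \<and> y = hd vs') \<or> (x = hd vs' \<and> y = last vs')"
    using xy c(5) by (auto simp: doubleton_eq_iff)
  then show ?thesis using p conn_sym[OF p] by blast
qed


definition lessE :: "edge \<Rightarrow> edge \<Rightarrow> bool" where
  "lessE e1 e2 \<longleftrightarrow> fst (fst e1) < fst (fst e2) \<or> (fst (fst e1) = fst (fst e2) \<and>
     (snd (fst e1) < snd (fst e2) \<or> (snd (fst e1) = snd (fst e2) \<and> \<not> snd e1 \<and> snd e2)))"

lemma lessE_irrefl: "\<not> lessE e e"
  unfolding lessE_def by auto

lemma lessE_trans: "lessE a b \<Longrightarrow> lessE b c \<Longrightarrow> lessE a c"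
  unfolding lessE_def by auto

lemma lessE_total: "a \<noteq> b \<Longrightarrow> lessE a b \<or> lessE b a"
  unfolding lessE_def by (cases a; cases b) auto

lemma finite_max:
  "finite S \<Longrightarrow> S \<noteq> {} \<Longrightarrow> \<exists>m\<in>S. \<forall>x\<in>S. x \<noteq> m \<longrightarrow> lessE x m"
proof (induction S rule: finite_ne_induct)
  case (singleton x) then show ?case by simp
next
  case (insert y S)
  then obtain m where m: "m \<in> S" "\<forall>x\<in>S. x \<noteq> m \<longrightarrow> lessE x m" by blast
  show ?case
  proof (cases "lessE m y")
    case True
    have "\<forall>x\<in>insert y S. x \<noteq> y \<longrightarrow> lessE x y"
    proof (intro ballI impI)
      fix x assume "x \<in> insert y S" "x \<noteq> y"
      then have "x \<in> S" by simp
      show "lessE x y"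
      proof (cases "x = m")
        case True then show ?thesis using \<open>lessE m y\<close> by simp
      next
        case False then show ?thesis using m(2) \<open>x \<in> S\<close> \<open>lessE m y\<close> lessE_trans by blast
      qed
    qed
    then show ?thesis by blast
  next
    case False
    then have "y \<noteq> m \<longrightarrow> lessE y m" using lessE_total by blast
    then show ?thesis using m by (intro bexI[of _ m]) auto
  qed
qed

lemma finite_min:
  "finite S \<Longrightarrow> S \<noteq> {} \<Longrightarrow> \<exists>m\<in>S. \<forall>x\<in>S. \<not> lessE x m"
proof (induction S rule: finite_ne_induct)
  case (singleton x) then show ?case by (simp add: lessE_irrefl)
next
  case (insert y S)
  then obtain m where m: "m \<in> S" "\<forall>x\<in>S. \<not> lessE x m" by blast
  show ?case
  proof (cases "lessE y m")
    case True
    have "\<forall>x\<in>insert y S. \<not> lessE x y"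
    proof
      fix x assume "x \<in> insert y S"
      then show "\<not> lessE x y"
      proof
        assume "x = y" then show ?thesis using lessE_irrefl by simp
      next
        assume "x \<in> S" then show ?thesis using m(2) True lessE_trans by blast
      qed
    qed
    then show ?thesis by blast
  next
    case False
    then show ?thesis using m by (intro bexI[of _ m]) auto
  qed
qed

definition cmax :: "(edge \<Rightarrow> bool) \<Rightarrow> edge \<Rightarrow> bool" where
  "cmax G e \<longleftrightarrow> (\<exists>vs. scyc G vs \<and> e \<in> Cs vs \<and> (\<forall>e'\<in>Cs vs. e' \<noteq> e \<longrightarrow> lessE e' e))"

definition fsf :: "(edge \<Rightarrow> bool) \<Rightarrow> edge \<Rightarrow> bool" where
  "fsf G = (\<lambda>e. G e \<and> \<not> cmax G e)"

lemma rt_lift: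
  assumes "\<And>a b. r a b \<Longrightarrow> s\<^sup>*\<^sup>* a b" "r\<^sup>*\<^sup>* x y"
  shows "s\<^sup>*\<^sup>* x y"
  using assms(2) by (induction rule: rtranclp_induct) (auto intro: rtranclp_trans assms(1))

lemma scyc_G: "scyc G vs \<Longrightarrow> e \<in> Cs vs \<Longrightarrow> G e"
  unfolding scyc_alt by blast

lemma Cs_ne: "scyc G vs \<Longrightarrow> Cs vs \<noteq> {}"
proof -
  assume s: "scyc G vs"
  then have "vs \<noteq> []" unfolding scyc_def by auto
  then have "{last vs, hd vs} \<in> cpairs vs" by (simp add: cpairs_def)
  then obtain e where "ends e = {last vs, hd vs}" using s unfolding scyc_def by blast
  then have "e \<in> Cs vs" using \<open>{last vs, hd vs} \<in> cpairs vs\<close> by (simp add: Cs_def)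
  then show ?thesis by blast
qed

lemma fsf_acyclic: "\<not> (\<exists>C. simple_cycle (fsf G) C)"
proof
  assume "\<exists>C. simple_cycle (fsf G) C"
  then obtain vs where s: "scyc (fsf G) vs" using simple_cycle_iff by blast
  obtain m where m: "m \<in> Cs vs" "\<forall>x\<in>Cs vs. x \<noteq> m \<longrightarrow> lessE x m"
    using finite_max[OF Cs_finite Cs_ne[OF s]] by blast
  have Fm: "fsf G m" using scyc_G[OF s m(1)] .
  have "scyc G vs" using s unfolding scyc_alt fsf_def by blast
  then have "cmax G m" unfolding cmax_def using m by blast
  then show False using Fm unfolding fsf_def by simp
qed

lemma fsf_conn_edge:
  assumes fmc: "finitely_many_cycles G"
  shows "\<forall>e. (\<exists>vs. scyc G vs \<and> u \<in> set vs \<and> e \<in> Cs vs) \<longrightarrow>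
     (\<forall>x y. ends e = {x, y} \<longrightarrow> connected_in (fsf G) x y)"
proof (rule ccontr)
  define E where "E = {e. \<exists>vs. scyc G vs \<and> u \<in> set vs \<and> e \<in> Cs vs}"
  define W where "W = {e \<in> E. \<not> (\<forall>x y. ends e = {x, y} \<longrightarrow> connected_in (fsf G) x y)}"
  assume "\<not> ?thesis"
  then have Wne: "W \<noteq> {}" unfolding W_def E_def by blast
  have EU: "E = \<Union>{C. \<exists>vs. scyc G vs \<and> u \<in> set vs \<and> C = Cs vs}" unfolding E_def by blast
  have sX: "{C. \<exists>vs. scyc G vs \<and> u \<in> set vs \<and> C = Cs vs} \<subseteq> {C. simple_cycle G C \<and> u \<in> \<Union>(ends ` C)}"
  proof
    fix C assume "C \<in> {C. \<exists>vs. scyc G vs \<and> u \<in> set vs \<and> C = Cs vs}"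
    then obtain vs where "scyc G vs" "u \<in> set vs" "C = Cs vs" by blast
    then show "C \<in> {C. simple_cycle G C \<and> u \<in> \<Union>(ends ` C)}"
      using simple_cycle_iff scyc_vert by blast
  qed
  have "finite {C. simple_cycle G C \<and> u \<in> \<Union>(ends ` C)}"
    using fmc unfolding finitely_many_cycles_def by blast
  then have fX: "finite {C. \<exists>vs. scyc G vs \<and> u \<in> set vs \<and> C = Cs vs}"
    using sX by (rule finite_subset[rotated])
  have "\<forall>C\<in>{C. \<exists>vs. scyc G vs \<and> u \<in> set vs \<and> C = Cs vs}. finite C" using Cs_finite by blast
  then have "finite E" unfolding EU using fX by (rule_tac finite_Union) auto
  then have "finite W" unfolding W_def by simp
  obtain m where m: "m \<in> W" "\<forall>x\<in>W. \<not> lessE x m" using finite_min[OF \<open>finite W\<close> Wne] by blast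
  have mE: "m \<in> E" using m(1) unfolding W_def by simp
  then obtain ds where ds: "scyc G ds" "u \<in> set ds" "m \<in> Cs ds" unfolding E_def by blast
  have Gm: "G m" using scyc_G[OF ds(1,3)] .
  obtain x y where xy: "ends m = {x, y}" "\<not> connected_in (fsf G) x y" using m(1) unfolding W_def by blast
  show False
  proof (cases "fsf G m")
    case True
    then have "gstep (fsf G) x y" unfolding gstep_def using xy(1) by blast
    then show False using xy(2) unfolding connected_in_def by blast
  next
    case False
    then have "cmax G m" using Gm unfolding fsf_def by simp
    then obtain vs where vs: "scyc G vs" "m \<in> Cs vs" "\<forall>e'\<in>Cs vs. e' \<noteq> m \<longrightarrow> lessE e' m"
      unfolding cmax_def by blast
    let ?R = "\<lambda>e'. G e' \<and> e' \<in> Cs vs \<and> e' \<noteq> m"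
    have p: "(gstep ?R)\<^sup>*\<^sup>* x y" using cyc_path[OF vs(1,2) xy(1)] .
    have "(gstep (fsf G))\<^sup>*\<^sup>* x y"
    proof (rule rt_lift[OF _ p])
      fix a b assume "gstep ?R a b"
      then obtain e' where e': "G e'" "e' \<in> Cs vs" "e' \<noteq> m" "ends e' = {a, b}"
        unfolding gstep_def by blast
      have "e' \<in> E" using glue[OF ds vs(1,2) e'(2)] unfolding E_def by blast
      moreover have "lessE e' m" using vs(3) e'(2,3) by blast
      ultimately have "e' \<notin> W" using m(2) by blast
      then show "(gstep (fsf G))\<^sup>*\<^sup>* a b" using \<open>e' \<in> E\<close> e'(4)
        unfolding W_def connected_in_def by blast
    qed
    then show False using xy(2) unfolding connected_in_def by blast
  qed
qed

lemma fsf_spanning: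
  assumes fmc: "finitely_many_cycles G"
  shows "spanning_forest G (fsf G)"
  unfolding spanning_forest_def
proof (intro conjI allI)
  show "\<And>e. fsf G e \<longrightarrow> G e" unfolding fsf_def by simp
  show "\<not> (\<exists>C. simple_cycle (fsf G) C)" by (rule fsf_acyclic)
  fix u v
  show "connected_in (fsf G) u v = connected_in G u v"
  proof
    assume "connected_in (fsf G) u v"
    have st: "\<And>a b. gstep (fsf G) a b \<Longrightarrow> (gstep G)\<^sup>*\<^sup>* a b"
      unfolding gstep_def fsf_def by blast
    show "connected_in G u v" using rt_lift[OF st] \<open>connected_in (fsf G) u v\<close>
      unfolding connected_in_def by blast
  next
    assume "connected_in G u v"
    then show "connected_in (fsf G) u v" unfolding connected_in_def
    proof (rule rt_lift[rotated])
      fix a b assume "gstep G a b"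
      then obtain e where e: "G e" "ends e = {a, b}" unfolding gstep_def by blast
      show "(gstep (fsf G))\<^sup>*\<^sup>* a b"
      proof (cases "fsf G e")
        case True
        then show ?thesis using e(2) unfolding gstep_def by blast
      next
        case False
        then have "cmax G e" using e(1) unfolding fsf_def by simp
        then obtain vs where vs: "scyc G vs" "e \<in> Cs vs" unfolding cmax_def by blast
        have "a \<in> set vs" using vs(2) e(2) cpairs_subset unfolding Cs_def by blast
        then show ?thesis using fsf_conn_edge[OF fmc, of a] vs e(2) unfolding connected_in_def by blast
      qed
    qed
  qed
qed



definition negv :: "vtx \<Rightarrow> vtx" where "negv a = (- fst a, - snd a)"

lemma shift_cfg_app: "shift_cfg a G e = G (shift_e (negv a) e)"
  by (simp add: shift_cfg_def negv_def)

lemma shift_e_inv: "shift_e (negv a) (shift_e a e) = e" "shift_e a (shift_e (negv a) e) = e"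
  by (auto simp: shift_e_def shift_v_def negv_def)

lemma negv_negv: "negv (negv a) = a" by (simp add: negv_def)

lemma ends_shift: "ends (shift_e a e) = shift_v a ` ends e"
  by (cases e) (auto simp: ends_def shift_e_def shift_v_def)

lemma shift_v_inv: "shift_v (negv a) (shift_v a x) = x"
  by (simp add: shift_v_def negv_def)

lemma shift_v_inj: "inj (shift_v a)"
  by (metis injI shift_v_inv)

lemma lessE_shift: "lessE (shift_e a e1) (shift_e a e2) = lessE e1 e2"
  by (simp add: lessE_def shift_e_def shift_v_def)

lemma ppairs_map: "ppairs (map f xs) = (\<lambda>p. f ` p) ` ppairs xs"
  by (induction xs rule: ppairs.induct) auto

lemma cpairs_map: "cpairs (map f xs) = (\<lambda>p. f ` p) ` cpairs xs"
  by (cases "xs = []") (auto simp: cpairs_def ppairs_map last_map hd_map)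

lemma Cs_map: "Cs (map (shift_v b) vs) = shift_e b ` Cs vs"
proof
  show "shift_e b ` Cs vs \<subseteq> Cs (map (shift_v b) vs)"
    by (auto simp: Cs_def cpairs_map ends_shift)
next
  show "Cs (map (shift_v b) vs) \<subseteq> shift_e b ` Cs vs"
  proof
    fix e' assume "e' \<in> Cs (map (shift_v b) vs)"
    then obtain p where p: "p \<in> cpairs vs" "ends e' = shift_v b ` p" by (auto simp: Cs_def cpairs_map)
    define e0 where "e0 = shift_e (negv b) e'"
    have "ends e0 = shift_v (negv b) ` shift_v b ` p" unfolding e0_def ends_shift p(2) ..
    also have "\<dots> = p" by (simp add: image_image shift_v_inv)
    finally have "e0 \<in> Cs vs" using p(1) by (simp add: Cs_def)
    moreover have "e' = shift_e b e0" unfolding e0_def by (simp add: shift_e_inv)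
    ultimately show "e' \<in> shift_e b ` Cs vs" by blast
  qed
qed

lemma cmax_shift1:
  assumes "cmax G e" shows "cmax (shift_cfg b G) (shift_e b e)"
proof -
  obtain vs where vs: "scyc G vs" "e \<in> Cs vs" "\<forall>e'\<in>Cs vs. e' \<noteq> e \<longrightarrow> lessE e' e"
    using assms unfolding cmax_def by blast
  define vs' where "vs' = map (shift_v b) vs"
  have C: "Cs vs' = shift_e b ` Cs vs" unfolding vs'_def by (rule Cs_map)
  have "scyc (shift_cfg b G) vs'"
    unfolding scyc_def
  proof (intro conjI ballI)
    show "distinct vs'" using vs(1) inj_on_subset[OF shift_v_inj subset_UNIV] unfolding scyc_def vs'_def
      by (simp add: distinct_map)
    show "3 \<le> length vs'" using vs(1) unfolding scyc_def vs'_def by simp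
    fix p' assume "p' \<in> cpairs vs'"
    then obtain p where p: "p \<in> cpairs vs" "p' = shift_v b ` p" unfolding vs'_def cpairs_map by blast
    then obtain e0 where e0: "G e0" "ends e0 = p" using vs(1) unfolding scyc_def by blast
    have "shift_cfg b G (shift_e b e0)" using e0(1) by (simp add: shift_cfg_app shift_e_inv)
    moreover have "ends (shift_e b e0) = p'" using e0(2) p(2) by (simp add: ends_shift)
    ultimately show "\<exists>e. shift_cfg b G e \<and> ends e = p'" by blast
  qed
  moreover have "shift_e b e \<in> Cs vs'" using vs(2) C by blast
  moreover have "\<forall>e'\<in>Cs vs'. e' \<noteq> shift_e b e \<longrightarrow> lessE e' (shift_e b e)"
  proof (intro ballI impI)
    fix e' assume a: "e' \<in> Cs vs'" "e' \<noteq> shift_e b e"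
    then obtain e0 where e0: "e0 \<in> Cs vs" "e' = shift_e b e0" using C by blast
    then have "e0 \<noteq> e" using a(2) by blast
    then have "lessE e0 e" using vs(3) e0(1) by blast
    then show "lessE e' (shift_e b e)" using e0(2) lessE_shift by simp
  qed
  ultimately show ?thesis unfolding cmax_def by blast
qed

lemma shift_cfg_inv: "shift_cfg (negv a) (shift_cfg a G) = G"
  by (simp add: fun_eq_iff shift_cfg_app negv_negv shift_e_inv)

lemma cmax_shift: "cmax (shift_cfg a G) e \<longleftrightarrow> cmax G (shift_e (negv a) e)"
proof
  assume "cmax (shift_cfg a G) e"
  from cmax_shift1[OF this, of "negv a"] show "cmax G (shift_e (negv a) e)"
    by (simp add: shift_cfg_inv)
next
  assume "cmax G (shift_e (negv a) e)"
  from cmax_shift1[OF this, of a] show "cmax (shift_cfg a G) e" by (simp add: shift_e_inv)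
qed

lemma fsf_shift: "fsf (shift_cfg a G) = shift_cfg a (fsf G)"
  by (simp add: fun_eq_iff fsf_def shift_cfg_app cmax_shift)

lemma cmax_alt: "cmax G e \<longleftrightarrow> (\<exists>vs. (distinct vs \<and> 3 \<le> length vs \<and> (\<forall>p\<in>cpairs vs. \<exists>e. ends e = p)
   \<and> e \<in> Cs vs \<and> (\<forall>e'\<in>Cs vs. e' \<noteq> e \<longrightarrow> lessE e' e)) \<and> (\<forall>e'. e' \<in> Cs vs \<longrightarrow> G e'))"
proof
  assume "cmax G e"
  then obtain vs where v: "scyc G vs" "e \<in> Cs vs" "\<forall>e'\<in>Cs vs. e' \<noteq> e \<longrightarrow> lessE e' e"
    unfolding cmax_def by blast
  have a: "distinct vs" "3 \<le> length vs" "\<forall>p\<in>cpairs vs. \<exists>e. ends e = p" "\<forall>e\<in>Cs vs. G e"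
    using v(1) unfolding scyc_alt by simp_all
  show "\<exists>vs. (distinct vs \<and> 3 \<le> length vs \<and> (\<forall>p\<in>cpairs vs. \<exists>e. ends e = p)
   \<and> e \<in> Cs vs \<and> (\<forall>e'\<in>Cs vs. e' \<noteq> e \<longrightarrow> lessE e' e)) \<and> (\<forall>e'. e' \<in> Cs vs \<longrightarrow> G e')"
    apply (rule exI[of _ vs]) using a v(2,3) by simp
next
  assume "\<exists>vs. (distinct vs \<and> 3 \<le> length vs \<and> (\<forall>p\<in>cpairs vs. \<exists>e. ends e = p)
   \<and> e \<in> Cs vs \<and> (\<forall>e'\<in>Cs vs. e' \<noteq> e \<longrightarrow> lessE e' e)) \<and> (\<forall>e'. e' \<in> Cs vs \<longrightarrow> G e')"
  then obtain vs where v: "distinct vs" "3 \<le> length vs" "\<forall>p\<in>cpairs vs. \<exists>e. ends e = p"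
    "e \<in> Cs vs" "\<forall>e'\<in>Cs vs. e' \<noteq> e \<longrightarrow> lessE e' e" "\<forall>e'. e' \<in> Cs vs \<longrightarrow> G e'" by blast
  have "\<forall>e'\<in>Cs vs. G e'" using v(6) by blast
  then have "scyc G vs" unfolding scyc_alt using v(1,2,3) by blast
  then show "cmax G e" unfolding cmax_def using v(4,5) by blast
qed

lemma cmax_pred: "Measurable.pred Mcfg (\<lambda>G. cmax G e)"
proof -
  have c: "\<And>e'. Measurable.pred Mcfg (\<lambda>G. G e')" unfolding Mcfg_def
    using measurable_component_singleton[of _ UNIV "\<lambda>_. count_space UNIV"] by simp
  have k: "\<And>b. Measurable.pred Mcfg (\<lambda>G. b)" by (rule measurable_const) simp
  show ?thesis unfolding cmax_alt
    apply (rule pred_intros_countable(2))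
    apply (rule pred_intros_logic(3)[OF k])
    apply (rule pred_intros_countable(1))
    apply (rule pred_intros_logic(4)[OF k c])
    done
qed

lemma fsf_meas: "fsf \<in> measurable Mcfg Mcfg"
  unfolding Mcfg_def fsf_def
proof (rule measurable_PiM_single')
  fix i :: edge
  have c: "Measurable.pred Mcfg (\<lambda>G. G i)" unfolding Mcfg_def
    using measurable_component_singleton[of _ UNIV "\<lambda>_. count_space UNIV"] by simp
  show "(\<lambda>G. G i \<and> \<not> cmax G i) \<in> measurable (Pi\<^sub>M UNIV (\<lambda>_. count_space UNIV)) (count_space UNIV)"
    using pred_intros_logic(3)[OF c pred_intros_logic(2)[OF cmax_pred]] unfolding Mcfg_def .
qed (simp add: space_PiM)

lemma shift_meas: "shift_cfg a \<in> measurable (Pi\<^sub>M UNIV (\<lambda>_. N)) (Pi\<^sub>M UNIV (\<lambda>_. N))"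
  unfolding shift_cfg_def
  by (rule measurable_PiM_single') (auto simp: space_PiM)



lemma comp_meas: "(\<lambda>G. G e) \<in> measurable Mcfg (count_space UNIV)"
  unfolding Mcfg_def using measurable_component_singleton[of e UNIV "\<lambda>_. count_space UNIV"] by simp

lemma main_gen:
  fixes \<rho> M :: "'x measure" and sh :: "vtx \<Rightarrow> 'x \<Rightarrow> 'x" and \<pi> :: "'x \<Rightarrow> edge \<Rightarrow> bool"
  assumes ps: "prob_space \<rho>" and sets: "sets \<rho> = sets M" and inv: "\<And>a. distr \<rho> M (sh a) = \<rho>"
    and ae: "AE x in \<rho>. finitely_many_cycles (\<pi> x)" and pm: "\<pi> \<in> measurable M Mcfg"
    and shm: "\<And>a. sh a \<in> measurable M M" and eqv: "\<And>a x. \<pi> (sh a x) = shift_cfg a (\<pi> x)"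
    and shc: "\<And>a. shift_cfg a \<in> measurable Mcfg Mcfg"
  shows "\<exists>\<mu>. prob_space \<mu> \<and> sets \<mu> = sets (M \<Otimes>\<^sub>M Mcfg) \<and> distr \<mu> M fst = \<rho> \<and>
     (\<forall>a. distr \<mu> (M \<Otimes>\<^sub>M Mcfg) (\<lambda>(x, F). (sh a x, shift_cfg a F)) = \<mu>) \<and>
     (AE p in \<mu>. spanning_forest (\<pi> (fst p)) (snd p))"
proof -
  define g where "g x = (x, fsf (\<pi> x))" for x
  have gM: "g \<in> measurable M (M \<Otimes>\<^sub>M Mcfg)" unfolding g_def
    by (intro measurable_Pair measurable_ident_sets[OF refl] measurable_compose[OF pm fsf_meas])
  have gR: "g \<in> measurable \<rho> (M \<Otimes>\<^sub>M Mcfg)"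
    by (subst measurable_cong_sets[OF sets refl]) (rule gM)
  define \<mu> where "\<mu> = distr \<rho> (M \<Otimes>\<^sub>M Mcfg) g"
  have P1: "prob_space \<mu>" unfolding \<mu>_def by (rule prob_space.prob_space_distr[OF ps gR])
  have P2: "sets \<mu> = sets (M \<Otimes>\<^sub>M Mcfg)" unfolding \<mu>_def by simp
  have "distr \<mu> M fst = distr \<rho> M (fst \<circ> g)" unfolding \<mu>_def
    by (rule distr_distr[OF measurable_fst gR])
  also have "fst \<circ> g = (\<lambda>x. x)" by (simp add: g_def fun_eq_iff)
  also have "distr \<rho> M (\<lambda>x. x) = \<rho>" by (rule distr_id2) (simp add: sets)
  finally have P3: "distr \<mu> M fst = \<rho>" .
  have P4: "distr \<mu> (M \<Otimes>\<^sub>M Mcfg) (\<lambda>(x, F). (sh a x, shift_cfg a F)) = \<mu>" for a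
  proof -
    have Seq: "(\<lambda>(x, F). (sh a x, shift_cfg a F)) = (\<lambda>p. (sh a (fst p), shift_cfg a (snd p)))"
      by (simp add: fun_eq_iff split_beta)
    have SM: "(\<lambda>(x, F). (sh a x, shift_cfg a F)) \<in> measurable (M \<Otimes>\<^sub>M Mcfg) (M \<Otimes>\<^sub>M Mcfg)"
      unfolding Seq
      by (intro measurable_Pair measurable_compose[OF measurable_fst shm] measurable_compose[OF measurable_snd shc])
    have shR: "sh a \<in> measurable \<rho> M"
      by (subst measurable_cong_sets[OF sets refl]) (rule shm)
    have "distr \<mu> (M \<Otimes>\<^sub>M Mcfg) (\<lambda>(x, F). (sh a x, shift_cfg a F))
        = distr \<rho> (M \<Otimes>\<^sub>M Mcfg) ((\<lambda>(x, F). (sh a x, shift_cfg a F)) \<circ> g)"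
      unfolding \<mu>_def by (rule distr_distr[OF SM gR])
    also have "(\<lambda>(x, F). (sh a x, shift_cfg a F)) \<circ> g = g \<circ> sh a"
      by (simp add: g_def fun_eq_iff eqv fsf_shift)
    also have "distr \<rho> (M \<Otimes>\<^sub>M Mcfg) (g \<circ> sh a) = distr (distr \<rho> M (sh a)) (M \<Otimes>\<^sub>M Mcfg) g"
      by (rule distr_distr[OF gM shR, symmetric])
    also have "\<dots> = \<mu>" unfolding inv \<mu>_def ..
    finally show ?thesis .
  qed
  obtain N where N: "{x \<in> space \<rho>. \<not> finitely_many_cycles (\<pi> x)} \<subseteq> N" "emeasure \<rho> N = 0" "N \<in> sets \<rho>"
    using ae by (rule AE_E)
  have NM: "N \<in> sets M" using N(3) sets by simp
  have sp: "space \<rho> = space M" using sets by (rule sets_eq_imp_space_eq)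
  define Q where "Q p \<longleftrightarrow> fst p \<notin> N \<and> (\<forall>e. snd p e = fsf (\<pi> (fst p)) e)" for p :: "'x \<times> (edge \<Rightarrow> bool)"
  have Qm: "{p \<in> space (M \<Otimes>\<^sub>M Mcfg). Q p} \<in> sets (M \<Otimes>\<^sub>M Mcfg)"
  proof -
    have f1: "Measurable.pred (M \<Otimes>\<^sub>M Mcfg) (\<lambda>p. fst p \<in> N)"
    proof -
      have "fst -` N \<inter> space (M \<Otimes>\<^sub>M Mcfg) \<in> sets (M \<Otimes>\<^sub>M Mcfg)"
        by (rule measurable_sets[OF measurable_fst NM])
      moreover have "fst -` N \<inter> space (M \<Otimes>\<^sub>M Mcfg) = {x \<in> space (M \<Otimes>\<^sub>M Mcfg). fst x \<in> N}" by blast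
      ultimately show ?thesis unfolding pred_def by simp
    qed
    have f2: "Measurable.pred (M \<Otimes>\<^sub>M Mcfg) (\<lambda>p. snd p e = fsf (\<pi> (fst p)) e)" for e
    proof -
      have a: "(\<lambda>p. snd p e) \<in> measurable (M \<Otimes>\<^sub>M Mcfg) (count_space UNIV)"
        by (rule measurable_compose[OF measurable_snd comp_meas])
      have b: "(\<lambda>p. fsf (\<pi> (fst p)) e) \<in> measurable (M \<Otimes>\<^sub>M Mcfg) (count_space UNIV)"
        by (rule measurable_compose[OF measurable_compose[OF measurable_compose[OF measurable_fst pm] fsf_meas]
          comp_meas])
      show ?thesis using pred_intros_logic(6)[OF a b] .
    qed
    have "Measurable.pred (M \<Otimes>\<^sub>M Mcfg) Q" unfolding Q_def
      by (intro pred_intros_logic(3) pred_intros_logic(2) f1 pred_intros_countable(1) f2)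
    then show ?thesis unfolding pred_def .
  qed
  have "AE x in \<rho>. x \<notin> N" using N(2,3) by (intro AE_not_in) (simp add: null_sets_def)
  then have "AE x in \<rho>. Q (g x)" by (rule eventually_mono) (simp add: Q_def g_def)
  then have "AE p in \<mu>. Q p" unfolding \<mu>_def using AE_distr_iff[OF gR Qm] by simp
  moreover have "AE p in \<mu>. p \<in> space \<mu>" by (rule AE_space)
  ultimately have "AE p in \<mu>. p \<in> space \<mu> \<and> Q p" by (rule eventually_conj[rotated])
  then have P5: "AE p in \<mu>. spanning_forest (\<pi> (fst p)) (snd p)"
  proof (rule eventually_mono)
    fix p assume h: "p \<in> space \<mu> \<and> Q p"
    have "fst p \<in> space M" using h P2 unfolding \<mu>_def by (auto simp: space_pair_measure)
    then have "fst p \<in> space \<rho>" using sp by simp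
    moreover have "fst p \<notin> N" using h unfolding Q_def by simp
    ultimately have "finitely_many_cycles (\<pi> (fst p))" using N(1) by blast
    moreover have "snd p = fsf (\<pi> (fst p))" using h unfolding Q_def by (simp add: fun_eq_iff)
    ultimately show "spanning_forest (\<pi> (fst p)) (snd p)" using fsf_spanning by simp
  qed
  show ?thesis using P1 P2 P3 P4 P5 by blast
qed


lemma shift_Mcfg: "shift_cfg a \<in> measurable Mcfg Mcfg"
  unfolding Mcfg_def by (rule shift_meas)

lemma shift_Mw: "shift_cfg a \<in> measurable Mw Mw"
  unfolding Mw_def by (rule shift_meas)

theorem lemma2p7:
  shows "(\<forall>\<rho> :: (edge \<Rightarrow> bool) measure.
      prob_space \<rho> \<and> sets \<rho> = sets Mcfg \<and>
      (\<forall>a. distr \<rho> Mcfg (shift_cfg a) = \<rho>) \<and>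
      (AE G in \<rho>. finitely_many_cycles G)
    \<longrightarrow> (\<exists>\<mu> :: ((edge \<Rightarrow> bool) \<times> (edge \<Rightarrow> bool)) measure.
      prob_space \<mu> \<and> sets \<mu> = sets (Mcfg \<Otimes>\<^sub>M Mcfg) \<and>
      distr \<mu> Mcfg fst = \<rho> \<and>
      (\<forall>a. distr \<mu> (Mcfg \<Otimes>\<^sub>M Mcfg) (\<lambda>(G, F). (shift_cfg a G, shift_cfg a F)) = \<mu>) \<and>
      (AE p in \<mu>. spanning_forest (fst p) (snd p))))
   \<and>
   (\<forall>\<rho> :: ((edge \<Rightarrow> bool) \<times> (edge \<Rightarrow> real)) measure.
      prob_space \<rho> \<and> sets \<rho> = sets (Mcfg \<Otimes>\<^sub>M Mw) \<and>
      (\<forall>a. distr \<rho> (Mcfg \<Otimes>\<^sub>M Mw) (\<lambda>(G, w). (shift_cfg a G, shift_cfg a w)) = \<rho>) \<and>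
      (AE q in \<rho>. finitely_many_cycles (fst q))
    \<longrightarrow> (\<exists>\<mu> :: (((edge \<Rightarrow> bool) \<times> (edge \<Rightarrow> real)) \<times> (edge \<Rightarrow> bool)) measure.
      prob_space \<mu> \<and> sets \<mu> = sets ((Mcfg \<Otimes>\<^sub>M Mw) \<Otimes>\<^sub>M Mcfg) \<and>
      distr \<mu> (Mcfg \<Otimes>\<^sub>M Mw) fst = \<rho> \<and>
      (\<forall>a. distr \<mu> ((Mcfg \<Otimes>\<^sub>M Mw) \<Otimes>\<^sub>M Mcfg)
             (\<lambda>((G, w), F). ((shift_cfg a G, shift_cfg a w), shift_cfg a F)) = \<mu>) \<and>
      (AE p in \<mu>. spanning_forest (fst (fst p)) (snd p))))"
proof (intro conjI allI impI)
  fix \<rho> :: "(edge \<Rightarrow> bool) measure"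
  assume h: "prob_space \<rho> \<and> sets \<rho> = sets Mcfg \<and> (\<forall>a. distr \<rho> Mcfg (shift_cfg a) = \<rho>) \<and>
      (AE G in \<rho>. finitely_many_cycles G)"
  have r: "\<exists>\<mu>. prob_space \<mu> \<and> sets \<mu> = sets (Mcfg \<Otimes>\<^sub>M Mcfg) \<and> distr \<mu> Mcfg fst = \<rho> \<and>
     (\<forall>a. distr \<mu> (Mcfg \<Otimes>\<^sub>M Mcfg) (\<lambda>(x, F). (shift_cfg a x, shift_cfg a F)) = \<mu>) \<and>
     (AE p in \<mu>. spanning_forest ((\<lambda>x. x) (fst p)) (snd p))"
    by (rule main_gen[where \<pi>="\<lambda>x. x"]) (use h shift_Mcfg in \<open>auto intro: measurable_ident_sets\<close>)
  then show "\<exists>\<mu> :: ((edge \<Rightarrow> bool) \<times> (edge \<Rightarrow> bool)) measure.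
      prob_space \<mu> \<and> sets \<mu> = sets (Mcfg \<Otimes>\<^sub>M Mcfg) \<and>
      distr \<mu> Mcfg fst = \<rho> \<and>
      (\<forall>a. distr \<mu> (Mcfg \<Otimes>\<^sub>M Mcfg) (\<lambda>(G, F). (shift_cfg a G, shift_cfg a F)) = \<mu>) \<and>
      (AE p in \<mu>. spanning_forest (fst p) (snd p))" by simp
next
  fix \<rho> :: "((edge \<Rightarrow> bool) \<times> (edge \<Rightarrow> real)) measure"
  assume h: "prob_space \<rho> \<and> sets \<rho> = sets (Mcfg \<Otimes>\<^sub>M Mw) \<and>
      (\<forall>a. distr \<rho> (Mcfg \<Otimes>\<^sub>M Mw) (\<lambda>(G, w). (shift_cfg a G, shift_cfg a w)) = \<rho>) \<and>
      (AE q in \<rho>. finitely_many_cycles (fst q))"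
  define sh where "sh a = (\<lambda>(G :: edge \<Rightarrow> bool, w :: edge \<Rightarrow> real). (shift_cfg a G, shift_cfg a w))" for a :: vtx
  have shm: "sh a \<in> measurable (Mcfg \<Otimes>\<^sub>M Mw) (Mcfg \<Otimes>\<^sub>M Mw)" for a
  proof -
    have "sh a = (\<lambda>p. (shift_cfg a (fst p), shift_cfg a (snd p)))" unfolding sh_def by (simp add: fun_eq_iff split_beta)
    then show ?thesis
      by (simp only:) (intro measurable_Pair measurable_compose[OF measurable_fst shift_Mcfg]
          measurable_compose[OF measurable_snd shift_Mw])
  qed
  have r: "\<exists>\<mu>. prob_space \<mu> \<and> sets \<mu> = sets ((Mcfg \<Otimes>\<^sub>M Mw) \<Otimes>\<^sub>M Mcfg) \<and> distr \<mu> (Mcfg \<Otimes>\<^sub>M Mw) fst = \<rho> \<and>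
     (\<forall>a. distr \<mu> ((Mcfg \<Otimes>\<^sub>M Mw) \<Otimes>\<^sub>M Mcfg) (\<lambda>(x, F). (sh a x, shift_cfg a F)) = \<mu>) \<and>
     (AE p in \<mu>. spanning_forest (fst (fst p)) (snd p))"
  proof (rule main_gen[where \<pi>=fst])
    show "prob_space \<rho>" "sets \<rho> = sets (Mcfg \<Otimes>\<^sub>M Mw)" "AE x in \<rho>. finitely_many_cycles (fst x)"
      using h by simp_all
    show "\<And>a. distr \<rho> (Mcfg \<Otimes>\<^sub>M Mw) (sh a) = \<rho>" using h unfolding sh_def by blast
    show "fst \<in> measurable (Mcfg \<Otimes>\<^sub>M Mw) Mcfg" by (rule measurable_fst)
    show "\<And>a. sh a \<in> measurable (Mcfg \<Otimes>\<^sub>M Mw) (Mcfg \<Otimes>\<^sub>M Mw)" by (rule shm)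
    show "\<And>a x. fst (sh a x) = shift_cfg a (fst x)" unfolding sh_def by (simp add: split_beta)
    show "\<And>a. shift_cfg a \<in> measurable Mcfg Mcfg" by (rule shift_Mcfg)
  qed
  have eq: "(\<lambda>((G, w), F). ((shift_cfg a G, shift_cfg a w), shift_cfg a F)) = (\<lambda>(x, F). (sh a x, shift_cfg a F))"
    for a :: vtx
    unfolding sh_def by (simp add: fun_eq_iff split_beta)
  show "\<exists>\<mu> :: (((edge \<Rightarrow> bool) \<times> (edge \<Rightarrow> real)) \<times> (edge \<Rightarrow> bool)) measure.
      prob_space \<mu> \<and> sets \<mu> = sets ((Mcfg \<Otimes>\<^sub>M Mw) \<Otimes>\<^sub>M Mcfg) \<and>
      distr \<mu> (Mcfg \<Otimes>\<^sub>M Mw) fst = \<rho> \<and>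
      (\<forall>a. distr \<mu> ((Mcfg \<Otimes>\<^sub>M Mw) \<Otimes>\<^sub>M Mcfg)
             (\<lambda>((G, w), F). ((shift_cfg a G, shift_cfg a w), shift_cfg a F)) = \<mu>) \<and>
      (AE p in \<mu>. spanning_forest (fst (fst p)) (snd p))" unfolding eq using r .
qed

end
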